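(* Let $\theta_0\in\mathsf\Theta\subseteq\mathbb{R}^d$ and let $Y_{1:n}=(Y_1,\dots,Y_n)\sim P^Y_{\theta_0}$, the marginal distribution of the observations under parameter $\theta_0$. For each $i$, let $\ell^S_i(\theta;y_i)$ be a random (simulation-based) estimator of the log-likelihood contribution of the observation $y_i$, and let the simulated log-likelihood of the whole data be $\ell^S(\theta;y_{1:n})=\sum_{i=1}^n \ell^S_i(\theta;y_i)$. Let $\mu_i(\theta;y_i)=\mathbb{E}\,\ell^S_i(\theta;y_i)$, where the expectation is over the simulation randomness with $y_i$ fixed, so that $\mu(\theta;y_{1:n}):=\mathbb{E}\,\ell^S(\theta;y_{1:n})=\sum_{i=1}^n\mu_i(\theta;y_i)$. Let $\theta_*=\mathcal R(\theta_0)$ be the simulation-based proxy, i.e. the maximizer over $\theta$ of $U(\theta_0,\theta):=\mathbb{E}_{\theta_0}\,\mu(\theta;Y)$. Assume: (i) $\mu_i(\theta;y_i)$ is three times continuously differentiable in $\theta=(\theta_{(1)},\dots,\theta_{(d)})$ for every $y_i$, $i\in 1{:}n$; (ii) there is a positive definite $K_1(\theta_0)\in\mathbb{R}^{d\times d}$ such that $\frac{1}{\sqrt n}\sum_{i=1}^n\frac{\partial\mu_i}{\partial\theta}(\theta_*;Y_i)$ converges in distribution to $\mathcal N(0,K_1(\theta_0))$ as $n\to\infty$; (iii) there is a positive definite $K_2(\theta_0)\in\mathbb{R}^{d\times d}$ such that $\frac{1}{n}\sum_{i=1}^n\frac{\partial^2\mu_i}{\partial\theta^2}(\theta_*;Y_i)$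 converges in probability to $-K_2(\theta_0)$; (iv) there exist an open ball $B_0$ containing $\theta_*$ and a constant $C$ such that for every $i$, $\mathbb{E}\,\sup_{\theta\in B_0}\max_{k_1,k_2,k_3\in 1:d}\left\|\frac{\partial^3\mu_i}{\partial\theta_{(k_1)}\partial\theta_{(k_2)}\partial\theta_{(k_3)}}(\theta;Y_i)\right\|\le C$. Let $S_n:=\frac{1}{\sqrt n}\sum_{i=1}^n\frac{\partial\mu_i}{\partial\theta}(\theta_*;Y_i)$. Then $S_n$ converges in distribution to $\mathcal N(0,K_1(\theta_0))$, and for every bounded set $B\subset\mathbb{R}^d$ containing $0$, \[ \mu\!\left(\theta_*+\tfrac{t}{\sqrt n};Y_{1:n}\right)-\mu(\theta_*;Y_{1:n})-S_n^\top t+\tfrac12 t^\top K_2(\theta_0)t \] converges in probability to zero uniformly over $t\in B$ as $n\to\infty$.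
   Context: Setting: a latent process $X$ with law $P_\theta$ is implicitly defined by a simulator, and observations $y=y_{1:n}$ have measurement density $g(y\mid x;\theta)$; the marginal density of $Y$ is $p^Y_\theta(y)=\int g(y\mid x;\theta)\,dP_\theta(x)$ with law $P^Y_\theta$. A "simulated log-likelihood" is an estimate of $\log p^Y_\theta(y)$ obtained by simulating $X$. The simulation-based proxy $\mathcal R(\theta_0)=\arg\max_\theta U(\theta_0,\theta)$, $U(\theta_0,\theta)=\int\mu(\theta;y)p^Y_{\theta_0}(y)\,dy$, is assumed well defined. *)

theory Defs
  imports "HOL-Probability.Probability"
begin

definition partial_deriv :: "'d::finite \<Rightarrow> (real^'d \<Rightarrow> real) \<Rightarrow> real^'d \<Rightarrow> real" where
  "partial_deriv k f x = deriv (\<lambda>s. f (x + s *\<^sub>R axis k 1)) 0"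

definition has_partial :: "'d::finite \<Rightarrow> (real^'d \<Rightarrow> real) \<Rightarrow> bool" where
  "has_partial k f \<longleftrightarrow> (\<forall>x. (\<lambda>s. f (x + s *\<^sub>R axis k 1)) differentiable (at 0))"

definition C3 :: "(real^'d::finite \<Rightarrow> real) \<Rightarrow> bool" where
  "C3 f \<longleftrightarrow> continuous_on UNIV f
     \<and> (\<forall>k. has_partial k f \<and> continuous_on UNIV (partial_deriv k f))
     \<and> (\<forall>j k. has_partial j (partial_deriv k f)
              \<and> continuous_on UNIV (partial_deriv j (partial_deriv k f)))
     \<and> (\<forall>i j k. has_partial i (partial_deriv j (partial_deriv k f))
              \<and> continuous_on UNIV (partial_deriv i (partial_deriv j (partial_deriv k f))))"

definition gradient_vec :: "(real^'d::finite \<Rightarrow> real) \<Rightarrow> real^'d \<Rightarrow> real^'d" where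
  "gradient_vec f x = (\<chi> k. partial_deriv k f x)"

definition hessian_mat :: "(real^'d::finite \<Rightarrow> real) \<Rightarrow> real^'d \<Rightarrow> real^'d^'d" where
  "hessian_mat f x = (\<chi> j k. partial_deriv j (partial_deriv k f) x)"

definition third_partial :: "(real^'d::finite \<Rightarrow> real) \<Rightarrow> 'd \<Rightarrow> 'd \<Rightarrow> 'd \<Rightarrow> real^'d \<Rightarrow> real" where
  "third_partial f i j k x = partial_deriv i (partial_deriv j (partial_deriv k f)) x"

definition pos_def_mat :: "real^'d^'d \<Rightarrow> bool" where
  "pos_def_mat K \<longleftrightarrow> transpose K = K \<and> (\<forall>x. x \<noteq> 0 \<longrightarrow> x \<bullet> (K *v x) > 0)"

definition mvnormal_density :: "real^'d^'d \<Rightarrow> real^'d::finite \<Rightarrow> real" where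
  "mvnormal_density K x =
     exp (- (x \<bullet> (matrix_inv K *v x)) / 2) / sqrt ((2 * pi) ^ CARD('d) * det K)"

definition mvnormal :: "real^'d^'d \<Rightarrow> (real^'d::finite) measure" where
  "mvnormal K = density lborel (\<lambda>x. ennreal (mvnormal_density K x))"

definition conv_in_distr :: "'a measure \<Rightarrow> (nat \<Rightarrow> 'a \<Rightarrow> real^'d::finite) \<Rightarrow> (real^'d) measure \<Rightarrow> bool" where
  "conv_in_distr M X N \<longleftrightarrow>
     (\<forall>f :: real^'d \<Rightarrow> real. continuous_on UNIV f \<and> bounded (range f) \<longrightarrow>
        (\<lambda>n. \<integral>\<omega>. f (X n \<omega>) \<partial>M) \<longlonglongrightarrow> (\<integral>x. f x \<partial>N))"

definition outer_prob :: "'a measure \<Rightarrow> 'a set \<Rightarrow> real" where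
  "outer_prob M A = Inf {measure M B | B. B \<in> sets M \<and> A \<inter> space M \<subseteq> B}"

definition conv_in_prob :: "'a measure \<Rightarrow> (nat \<Rightarrow> 'a \<Rightarrow> 'b::metric_space) \<Rightarrow> 'b \<Rightarrow> bool" where
  "conv_in_prob M X c \<longleftrightarrow>
     (\<forall>\<epsilon>>0. (\<lambda>n. outer_prob M {\<omega> \<in> space M. dist (X n \<omega>) c > \<epsilon>}) \<longlonglongrightarrow> 0)"

definition unif_conv_in_prob_zero :: "'a measure \<Rightarrow> (nat \<Rightarrow> 't \<Rightarrow> 'a \<Rightarrow> real) \<Rightarrow> 't set \<Rightarrow> bool" where
  "unif_conv_in_prob_zero M R B \<longleftrightarrow>
     (\<forall>\<epsilon>>0. (\<lambda>n. outer_prob M {\<omega> \<in> space M. \<exists>t\<in>B. \<bar>R n t \<omega>\<bar> > \<epsilon>}) \<longlonglongrightarrow> 0)"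

end

theory Submission
  imports Defs
begin

lemma partial_line_deriv:
  fixes g :: "real^'d::finite \<Rightarrow> real"
  assumes "has_partial k g"
  shows "((\<lambda>s. g (y + s *\<^sub>R axis k 1)) has_real_derivative partial_deriv k g (y + s0 *\<^sub>R axis k 1)) (at s0)"
proof -
  let ?G = "\<lambda>s. g (y + s *\<^sub>R axis k 1)"
  have eq: "(\<lambda>u. g ((y + s0 *\<^sub>R axis k 1) + u *\<^sub>R axis k 1)) = (\<lambda>u. ?G (u + s0))"
    by (rule ext) (simp add: scaleR_add_left algebra_simps)
  have "(\<lambda>u. g ((y + s0 *\<^sub>R axis k 1) + u *\<^sub>R axis k 1)) differentiable (at 0)"
    using assms unfolding has_partial_def by blast
  hence "DERIV (\<lambda>u. g ((y + s0 *\<^sub>R axis k 1) + u *\<^sub>R axis k 1)) 0 :> partial_deriv k g (y + s0 *\<^sub>R axis k 1)"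
    unfolding partial_deriv_def by (simp add: DERIV_deriv_iff_real_differentiable)
  hence "DERIV (\<lambda>u. ?G (u + s0)) 0 :> partial_deriv k g (y + s0 *\<^sub>R axis k 1)"
    by (simp only: eq)
  hence "DERIV ?G (0 + s0) :> partial_deriv k g (y + s0 *\<^sub>R axis k 1)"
    by (simp only: DERIV_shift)
  thus ?thesis by simp
qed

lemma mvt_abs:
  fixes G G' :: "real \<Rightarrow> real"
  assumes "\<And>s. DERIV G s :> G' s"
  shows "\<exists>t. \<bar>t\<bar> \<le> \<bar>b\<bar> \<and> G b - G 0 = b * G' t"
proof (cases "b = 0")
  case True thus ?thesis by (intro exI[of _ 0]) auto
next
  case False
  show ?thesis
  proof (cases "b > 0")
    case True
    from MVT2[OF True] assms obtain z where "0 < z" "z < b" "G b - G 0 = (b - 0) * G' z" by blast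
    thus ?thesis by (intro exI[of _ z]) auto
  next
    case False
    with \<open>b \<noteq> 0\<close> have "b < 0" by simp
    from MVT2[OF this] assms obtain z where "b < z" "z < 0" "G 0 - G b = (0 - b) * G' z" by blast
    thus ?thesis by (intro exI[of _ z]) (auto simp: algebra_simps)
  qed
qed

lemma proj_comp:
  fixes h :: "real^'d::finite"
  shows "(\<Sum>j\<in>S. h$j *\<^sub>R axis j (1::real)) $ i = (if i \<in> S then h$i else 0)"
proof -
  have "(\<Sum>j\<in>S. h$j *\<^sub>R axis j (1::real)) $ i = (\<Sum>j\<in>S. h$j * (if i = j then 1 else 0))"
    by (simp add: axis_def)
  also have "\<dots> = (if i \<in> S then h$i else 0)"
    by (simp add: if_distrib sum.delta cong: if_cong)
  finally show ?thesis .
qed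

lemma proj_UNIV:
  fixes h :: "real^'d::finite"
  shows "(\<Sum>j\<in>UNIV. h$j *\<^sub>R axis j (1::real)) = h"
proof -
  have "\<And>i. (\<Sum>j\<in>UNIV. h$j *\<^sub>R axis j (1::real)) $ i = h $ i"
    using proj_comp[of h UNIV] by simp
  thus ?thesis by (simp add: vec_eq_iff)
qed

lemma proj_step_norm:
  fixes h :: "real^'d::finite"
  assumes "k \<notin> S" "\<bar>t\<bar> \<le> \<bar>h$k\<bar>"
  shows "norm ((\<Sum>j\<in>S. h$j *\<^sub>R axis j (1::real)) + t *\<^sub>R axis k 1) \<le> norm h"
proof (rule norm_le_componentwise_cart)
  fix i
  show "norm (((\<Sum>j\<in>S. h$j *\<^sub>R axis j (1::real)) + t *\<^sub>R axis k 1) $ i) \<le> norm (h $ i)"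
    unfolding vector_add_component vector_scaleR_component proj_comp
    using assms by (auto simp: axis_def)
qed

lemma FD:
  fixes g :: "real^'d::finite \<Rightarrow> real"
  assumes hp: "\<And>k. has_partial k g" and cp: "\<And>k. continuous_on UNIV (partial_deriv k g)"
  shows "(g has_derivative (\<lambda>h. \<Sum>k\<in>UNIV. h$k * partial_deriv k g x)) (at x)"
proof -
  define P where "P S h = (\<Sum>j\<in>S. h$j *\<^sub>R axis j (1::real))" for S and h :: "real^'d"
  define D where "D = (\<lambda>k. partial_deriv k g)"
  have main: "\<forall>e>0. \<exists>d>0. \<forall>h. norm h < d \<longrightarrow>
      \<bar>g (x + P S h) - g x - (\<Sum>k\<in>S. h$k * D k x)\<bar> \<le> real (card S) * e * norm h"
    if "finite S" for S
    using that
  proof (induction S rule: finite_induct)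
    case empty
    then show ?case by (auto simp: P_def intro!: exI[of _ 1])
  next
    case (insert k S)
    show ?case
    proof (intro allI impI)
      fix e :: real assume e: "e > 0"
      from insert.IH e obtain d1 where d1: "d1 > 0" and
        H1: "\<And>h. norm h < d1 \<Longrightarrow> \<bar>g (x + P S h) - g x - (\<Sum>k\<in>S. h$k * D k x)\<bar> \<le> real (card S) * e * norm h"
        by blast
      from cp[of k] e obtain d2 where d2: "d2 > 0" and
        H2: "\<And>z. dist z x < d2 \<Longrightarrow> dist (D k z) (D k x) < e"
        unfolding continuous_on_iff D_def by blast
      show "\<exists>d>0. \<forall>h. norm h < d \<longrightarrow>
        \<bar>g (x + P (insert k S) h) - g x - (\<Sum>k\<in>insert k S. h$k * D k x)\<bar> \<le> real (card (insert k S)) * e * norm h"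
      proof (intro exI[of _ "min d1 d2"] conjI allI impI)
        show "min d1 d2 > 0" using d1 d2 by simp
        fix h :: "real^'d" assume hn: "norm h < min d1 d2"
        define y where "y = x + P S h"
        have Pins: "x + P (insert k S) h = y + h$k *\<^sub>R axis k 1"
          using insert.hyps by (simp add: P_def y_def algebra_simps)
        have "\<And>s. ((\<lambda>s. g (y + s *\<^sub>R axis k 1)) has_real_derivative D k (y + s *\<^sub>R axis k 1)) (at s)"
          unfolding D_def by (rule partial_line_deriv[OF hp])
        from mvt_abs[OF this, of "h$k"] obtain t where t: "\<bar>t\<bar> \<le> \<bar>h$k\<bar>"
          and mv: "g (y + h$k *\<^sub>R axis k 1) - g y = h$k * D k (y + t *\<^sub>R axis k 1)"
          by auto
        have "norm (P S h + t *\<^sub>R axis k 1) \<le> norm h"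
          unfolding P_def by (rule proj_step_norm[OF insert.hyps(2) t])
        hence dd: "dist (y + t *\<^sub>R axis k 1) x < d2" using hn
          by (simp add: dist_norm y_def algebra_simps)
        hence dk: "\<bar>D k (y + t *\<^sub>R axis k 1) - D k x\<bar> \<le> e"
          using H2[OF dd] by (simp add: dist_real_def)
        have hk: "\<bar>h$k\<bar> \<le> norm h"
          using component_le_norm_cart[of h k] by simp
        have "\<bar>h$k * (D k (y + t *\<^sub>R axis k 1) - D k x)\<bar> \<le> norm h * e"
          unfolding abs_mult by (rule mult_mono[OF hk dk]) auto
        moreover have "\<bar>g y - g x - (\<Sum>k\<in>S. h$k * D k x)\<bar> \<le> real (card S) * e * norm h"
          using H1 hn unfolding y_def by simp
        moreover have "g (x + P (insert k S) h) - g x - (\<Sum>k\<in>insert k S. h$k * D k x)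
           = h$k * (D k (y + t *\<^sub>R axis k 1) - D k x) + (g y - g x - (\<Sum>k\<in>S. h$k * D k x))"
          using insert.hyps mv by (simp add: Pins algebra_simps)
        ultimately show "\<bar>g (x + P (insert k S) h) - g x - (\<Sum>k\<in>insert k S. h$k * D k x)\<bar>
           \<le> real (card (insert k S)) * e * norm h"
          using insert.hyps by (simp add: algebra_simps)
      qed
    qed
  qed
  have bl: "bounded_linear (\<lambda>h::real^'d. \<Sum>k\<in>UNIV. h$k * partial_deriv k g x)"
    by (auto intro!: bounded_linear_intros)
  show ?thesis
    unfolding has_derivative_at_alt
  proof (intro conjI bl allI impI)
    fix e :: real assume e: "e > 0"
    have cpos: "real CARD('d) > 0" by simp
    from main[of UNIV] e cpos obtain d where d: "d > 0" and
      H: "\<And>h. norm h < d \<Longrightarrow> \<bar>g (x + P UNIV h) - g x - (\<Sum>k\<in>UNIV. h$k * D k x)\<bar>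
          \<le> real CARD('d) * (e / real CARD('d)) * norm h"
      by (meson divide_pos_pos finite)
    show "\<exists>d>0. \<forall>y. norm (y - x) < d \<longrightarrow>
         norm (g y - g x - (\<Sum>k\<in>UNIV. (y - x)$k * partial_deriv k g x)) \<le> e * norm (y - x)"
    proof (intro exI[of _ d] conjI allI impI d)
      fix y assume "norm (y - x) < d"
      from H[OF this] cpos show "norm (g y - g x - (\<Sum>k\<in>UNIV. (y - x)$k * partial_deriv k g x)) \<le> e * norm (y - x)"
        unfolding P_def proj_UNIV D_def by simp
    qed
  qed
qed

lemma line_deriv:
  fixes g :: "real^'d::finite \<Rightarrow> real"
  assumes hp: "\<And>k. has_partial k g" and cp: "\<And>k. continuous_on UNIV (partial_deriv k g)"
  shows "((\<lambda>s. g (x + s *\<^sub>R h)) has_real_derivative (\<Sum>k\<in>UNIV. h$k * partial_deriv k g (x + s *\<^sub>R h))) (at s)"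
proof -
  have inner: "((\<lambda>s. x + s *\<^sub>R h) has_derivative (\<lambda>s'. s' *\<^sub>R h)) (at s)"
    by (auto intro!: derivative_eq_intros)
  have "((\<lambda>s. g (x + s *\<^sub>R h)) has_derivative
      (\<lambda>s'. \<Sum>k\<in>UNIV. (s' *\<^sub>R h)$k * partial_deriv k g (x + s *\<^sub>R h))) (at s)"
    by (rule has_derivative_compose[OF inner FD[OF hp cp]])
  moreover have "(\<lambda>s'. \<Sum>k\<in>UNIV. (s' *\<^sub>R h)$k * partial_deriv k g (x + s *\<^sub>R h))
      = (*) (\<Sum>k\<in>UNIV. h$k * partial_deriv k g (x + s *\<^sub>R h))"
    by (rule ext) (simp add: sum_distrib_left algebra_simps)
  ultimately show ?thesis by (simp add: has_field_derivative_def)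
qed

lemma taylor3:
  fixes f :: "real^'d::finite \<Rightarrow> real"
  assumes "C3 f"
  shows "\<exists>t. 0 < t \<and> t < 1 \<and> f (x + h) = f x + gradient_vec f x \<bullet> h
     + (1/2) * (\<Sum>k\<in>UNIV. h$k * (\<Sum>j\<in>UNIV. h$j * hessian_mat f x $ j $ k))
     + (1/6) * (\<Sum>k\<in>UNIV. h$k * (\<Sum>j\<in>UNIV. h$j * (\<Sum>i\<in>UNIV. h$i * third_partial f i j k (x + t *\<^sub>R h))))"
proof -
  define D1 where "D1 k = partial_deriv k f" for k
  define D2 where "D2 j k = partial_deriv j (D1 k)" for j k
  define D3 where "D3 i j k = partial_deriv i (D2 j k)" for i j k
  from assms have
    h0: "\<And>k. has_partial k f" "\<And>k. continuous_on UNIV (D1 k)" and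
    h1: "\<And>j k. has_partial j (D1 k)" "\<And>j k. continuous_on UNIV (D2 j k)" and
    h2: "\<And>i j k. has_partial i (D2 j k)" "\<And>i j k. continuous_on UNIV (D3 i j k)"
    unfolding C3_def D1_def D2_def D3_def by auto
  define p0 where "p0 s = f (x + s *\<^sub>R h)" for s
  define p1 where "p1 s = (\<Sum>k\<in>UNIV. h$k * D1 k (x + s *\<^sub>R h))" for s
  define p2 where "p2 s = (\<Sum>k\<in>UNIV. h$k * (\<Sum>j\<in>UNIV. h$j * D2 j k (x + s *\<^sub>R h)))" for s
  define p3 where "p3 s = (\<Sum>k\<in>UNIV. h$k * (\<Sum>j\<in>UNIV. h$j * (\<Sum>i\<in>UNIV. h$i * D3 i j k (x + s *\<^sub>R h))))" for s
  have d0: "DERIV p0 s :> p1 s" for s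
    unfolding p0_def p1_def D1_def using line_deriv[OF h0[unfolded D1_def]] .
  have d1: "DERIV p1 s :> p2 s" for s
    unfolding p1_def p2_def
    by (intro DERIV_sum DERIV_cmult line_deriv[of "D1 _", unfolded D2_def[symmetric]] h1[unfolded D2_def] h1)
  have d2: "DERIV p2 s :> p3 s" for s
    unfolding p2_def p3_def
    by (intro DERIV_sum DERIV_cmult line_deriv[of "D2 _ _", unfolded D3_def[symmetric]] h2[unfolded D3_def] h2)
  define diff where "diff m = (if m = 0 then p0 else if m = 1 then p1 else if m = 2 then p2 else p3)" for m :: nat
  have "\<forall>m t. m < 3 \<and> 0 \<le> t \<and> t \<le> 1 \<longrightarrow> DERIV (diff m) t :> diff (Suc m) t"
  proof (intro allI impI)
    fix m :: nat and t :: real assume "m < 3 \<and> 0 \<le> t \<and> t \<le> 1"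
    hence "m = 0 \<or> m = 1 \<or> m = 2" by auto
    thus "DERIV (diff m) t :> diff (Suc m) t"
      using d0 d1 d2 by (auto simp: diff_def)
  qed
  from Maclaurin[of 1 3 diff p0, OF _ _ _ this] obtain t where t: "0 < t" "t < 1"
    and eq: "p0 1 = (\<Sum>m<3. diff m 0 / fact m * 1 ^ m) + diff 3 t / fact 3 * 1 ^ 3"
    by (auto simp: diff_def)
  have "(\<Sum>m<3. diff m 0 / fact m * 1 ^ m) = p0 0 + p1 0 + p2 0 / 2"
    by (simp add: diff_def numeral_3_eq_3 lessThan_Suc)
  with eq have "p0 1 = p0 0 + p1 0 + p2 0 / 2 + p3 t / 6"
    by (simp add: diff_def fact_numeral)
  thus ?thesis using t
    by (intro exI[of _ t]) (simp add: p0_def p1_def p2_def p3_def D1_def D2_def D3_def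
        gradient_vec_def hessian_mat_def third_partial_def inner_vec_def mult.commute)
qed

lemma deriv_seq:
  fixes g :: "real \<Rightarrow> real"
  assumes "g differentiable (at 0)"
  shows "(\<lambda>m. (g (1 / real (Suc m)) - g 0) * real (Suc m)) \<longlonglongrightarrow> deriv g 0"
proof -
  have "DERIV g 0 :> deriv g 0" using assms by (simp add: DERIV_deriv_iff_real_differentiable)
  hence L: "((\<lambda>h. (g (0 + h) - g 0) / h) \<longlongrightarrow> deriv g 0) (at 0)" by (simp add: DERIV_def)
  have X: "(\<lambda>m. 1 / real (Suc m)) \<longlonglongrightarrow> 0"
    using LIMSEQ_inverse_real_of_nat by (simp add: inverse_eq_divide)
  have "((\<lambda>h. (g (0 + h) - g 0) / h) \<circ> (\<lambda>m. 1 / real (Suc m))) \<longlonglongrightarrow> deriv g 0"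
    using L X unfolding tendsto_at_iff_sequentially by auto
  thus ?thesis by (simp add: o_def)
qed

lemma partial_meas:
  fixes G :: "'a \<Rightarrow> real^'d::finite \<Rightarrow> real"
  assumes "\<And>\<theta>. (\<lambda>\<omega>. G \<omega> \<theta>) \<in> borel_measurable M" "\<And>\<omega>. has_partial k (G \<omega>)"
  shows "(\<lambda>\<omega>. partial_deriv k (G \<omega>) \<theta>) \<in> borel_measurable M"
proof (rule borel_measurable_LIMSEQ_real)
  fix \<omega>
  have "(\<lambda>s. G \<omega> (\<theta> + s *\<^sub>R axis k 1)) differentiable (at 0)"
    using assms(2) unfolding has_partial_def by blast
  from deriv_seq[OF this] show "(\<lambda>m. (G \<omega> (\<theta> + (1 / real (Suc m)) *\<^sub>R axis k 1) - G \<omega> \<theta>) * real (Suc m))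
      \<longlonglongrightarrow> partial_deriv k (G \<omega>) \<theta>"
    by (simp add: partial_deriv_def)
next
  fix m
  show "(\<lambda>\<omega>. (G \<omega> (\<theta> + (1 / real (Suc m)) *\<^sub>R axis k 1) - G \<omega> \<theta>) * real (Suc m)) \<in> borel_measurable M"
    by (intro borel_measurable_times borel_measurable_diff assms(1) borel_measurable_const)
qed

lemma sup_dense:
  fixes \<Phi> :: "real^'d::finite \<Rightarrow> real"
  assumes U: "open U" and D: "\<forall>X. open X \<longrightarrow> X \<noteq> {} \<longrightarrow> (\<exists>d\<in>D. d \<in> X)"
    and approx: "\<And>\<theta> r. \<theta> \<in> U \<Longrightarrow> r < \<Phi> \<theta> \<Longrightarrow> \<exists>V. open V \<and> \<theta> \<in> V \<and> (\<forall>\<theta>'\<in>V. r < \<Phi> \<theta>')"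
  shows "(\<Squnion>\<theta>\<in>U. ennreal (\<Phi> \<theta>)) = (\<Squnion>\<theta>\<in>U \<inter> D. ennreal (\<Phi> \<theta>))"
proof (rule antisym)
  show "(\<Squnion>\<theta>\<in>U \<inter> D. ennreal (\<Phi> \<theta>)) \<le> (\<Squnion>\<theta>\<in>U. ennreal (\<Phi> \<theta>))"
    by (rule SUP_subset_mono) auto
  show "(\<Squnion>\<theta>\<in>U. ennreal (\<Phi> \<theta>)) \<le> (\<Squnion>\<theta>\<in>U \<inter> D. ennreal (\<Phi> \<theta>))"
  proof (rule SUP_least)
    fix \<theta> assume th: "\<theta> \<in> U"
    let ?R = "(\<Squnion>\<theta>\<in>U \<inter> D. ennreal (\<Phi> \<theta>))"
    show "ennreal (\<Phi> \<theta>) \<le> ?R"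
    proof (rule ccontr)
      assume "\<not> ennreal (\<Phi> \<theta>) \<le> ?R"
      hence lt: "?R < ennreal (\<Phi> \<theta>)" by simp
      hence fin: "?R < \<top>" using less_trans by fastforce
      define r where "r = enn2real ?R"
      have Rr: "?R = ennreal r" using fin by (simp add: r_def)
      have r0: "0 \<le> r" by (simp add: r_def)
      from lt Rr have "ennreal r < ennreal (\<Phi> \<theta>)" by simp
      hence "r < \<Phi> \<theta>" using ennreal_less_iff[OF r0] by simp
      from approx[OF th this] obtain V where V: "open V" "\<theta> \<in> V" "\<forall>\<theta>'\<in>V. r < \<Phi> \<theta>'" by blast
      have "open (V \<inter> U)" "V \<inter> U \<noteq> {}" using V U th by auto
      with D obtain d where d: "d \<in> D" "d \<in> V \<inter> U" by blast
      have "ennreal r < ennreal (\<Phi> d)"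
        using V(3) d r0 by (simp add: ennreal_less_iff)
      also have "\<dots> \<le> ?R" using d by (intro SUP_upper) auto
      finally show False using Rr by simp
    qed
  qed
qed

lemma max3_lsc:
  fixes \<phi> :: "'d::finite \<Rightarrow> 'd \<Rightarrow> 'd \<Rightarrow> real^'d \<Rightarrow> real"
  assumes cont: "\<And>a b c. continuous_on UNIV (\<phi> a b c)"
    and r: "r < (MAX k1\<in>UNIV. MAX k2\<in>UNIV. MAX k3\<in>UNIV. \<bar>\<phi> k1 k2 k3 \<theta>\<bar>)"
  shows "\<exists>V. open V \<and> \<theta> \<in> V \<and> (\<forall>\<theta>'\<in>V. r < (MAX k1\<in>UNIV. MAX k2\<in>UNIV. MAX k3\<in>UNIV. \<bar>\<phi> k1 k2 k3 \<theta>'\<bar>))"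
proof -
  have ex: "\<exists>k. (MAX k\<in>UNIV. F k) = F k" for F :: "'d \<Rightarrow> real"
  proof -
    have "(MAX k\<in>UNIV. F k) \<in> range F" by (rule Max_in) auto
    thus ?thesis by (metis rangeE)
  qed
  have ge: "F k \<le> (MAX k\<in>UNIV. F k)" for F :: "'d \<Rightarrow> real" and k
    by (rule Max_ge) auto
  obtain k1 where 1: "(MAX k1\<in>UNIV. MAX k2\<in>UNIV. MAX k3\<in>UNIV. \<bar>\<phi> k1 k2 k3 \<theta>\<bar>) = (MAX k2\<in>UNIV. MAX k3\<in>UNIV. \<bar>\<phi> k1 k2 k3 \<theta>\<bar>)"
    using ex by blast
  obtain k2 where 2: "(MAX k2\<in>UNIV. MAX k3\<in>UNIV. \<bar>\<phi> k1 k2 k3 \<theta>\<bar>) = (MAX k3\<in>UNIV. \<bar>\<phi> k1 k2 k3 \<theta>\<bar>)"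
    using ex by blast
  obtain k3 where 3: "(MAX k3\<in>UNIV. \<bar>\<phi> k1 k2 k3 \<theta>\<bar>) = \<bar>\<phi> k1 k2 k3 \<theta>\<bar>"
    using ex by blast
  define V where "V = (\<lambda>\<theta>'. \<bar>\<phi> k1 k2 k3 \<theta>'\<bar>) -` {r<..}"
  have "open V" unfolding V_def
    by (intro open_vimage) (auto intro!: continuous_intros cont)
  moreover have "\<theta> \<in> V" using r 1 2 3 by (simp add: V_def)
  moreover have "r < (MAX k1\<in>UNIV. MAX k2\<in>UNIV. MAX k3\<in>UNIV. \<bar>\<phi> k1 k2 k3 \<theta>'\<bar>)" if "\<theta>' \<in> V" for \<theta>'
  proof -
    have "r < \<bar>\<phi> k1 k2 k3 \<theta>'\<bar>" using that by (simp add: V_def)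
    also have "\<dots> \<le> (MAX k3\<in>UNIV. \<bar>\<phi> k1 k2 k3 \<theta>'\<bar>)" by (rule ge)
    also have "\<dots> \<le> (MAX k2\<in>UNIV. MAX k3\<in>UNIV. \<bar>\<phi> k1 k2 k3 \<theta>'\<bar>)"
      by (rule ge[where F="\<lambda>k2. MAX k3\<in>UNIV. \<bar>\<phi> k1 k2 k3 \<theta>'\<bar>"])
    also have "\<dots> \<le> (MAX k1\<in>UNIV. MAX k2\<in>UNIV. MAX k3\<in>UNIV. \<bar>\<phi> k1 k2 k3 \<theta>'\<bar>)"
      by (rule ge[where F="\<lambda>k1. MAX k2\<in>UNIV. MAX k3\<in>UNIV. \<bar>\<phi> k1 k2 k3 \<theta>'\<bar>"])
    finally show ?thesis .
  qed
  ultimately show ?thesis by blast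
qed

definition qf :: "real^'d^'d \<Rightarrow> real^'d::finite \<Rightarrow> real" where
  "qf M h = (\<Sum>k\<in>UNIV. h$k * (\<Sum>j\<in>UNIV. h$j * M$j$k))"

lemma qf_inner: "t \<bullet> (M *v t) = qf M t"
proof -
  have "t \<bullet> (M *v t) = (\<Sum>j\<in>UNIV. \<Sum>k\<in>UNIV. t$j * M$j$k * t$k)"
    by (simp add: inner_vec_def matrix_vector_mult_def sum_distrib_left mult.assoc)
  also have "\<dots> = (\<Sum>k\<in>UNIV. \<Sum>j\<in>UNIV. t$j * M$j$k * t$k)" by (rule sum.swap)
  also have "\<dots> = qf M t" by (simp add: qf_def sum_distrib_left algebra_simps)
  finally show ?thesis .
qed

lemma qf_add: "qf (A + B) t = qf A t + qf B t"
  by (simp add: qf_def algebra_simps sum.distrib)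

lemma qf_scaleR: "qf (c *\<^sub>R A) t = c * qf A t"
  by (simp add: qf_def sum_distrib_left algebra_simps)

lemma qf_zero: "qf 0 t = 0" by (simp add: qf_def)

lemma qf_sum: "qf (\<Sum>i\<in>I. A i) t = (\<Sum>i\<in>I. qf (A i) t)"
  by (induction I rule: infinite_finite_induct) (simp_all add: qf_add qf_zero)

lemma qf_vec_scale: "qf M (c *\<^sub>R t) = c^2 * qf M t"
  by (simp add: qf_def sum_distrib_left algebra_simps power2_eq_square)

lemma sum_lin_bound:
  fixes h :: "real^'d::finite"
  assumes "\<And>i. \<bar>a i\<bar> \<le> B"
  shows "\<bar>\<Sum>i\<in>UNIV. h$i * a i\<bar> \<le> real CARD('d) * norm h * B"
proof -
  have "\<bar>\<Sum>i\<in>UNIV. h$i * a i\<bar> \<le> (\<Sum>i\<in>UNIV. \<bar>h$i * a i\<bar>)" by (rule sum_abs)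
  also have "\<dots> \<le> (\<Sum>i\<in>(UNIV::'d set). norm h * B)"
  proof (rule sum_mono)
    fix i
    have "\<bar>h$i\<bar> \<le> norm h" using component_le_norm_cart[of h i] by simp
    thus "\<bar>h$i * a i\<bar> \<le> norm h * B" unfolding abs_mult
      by (rule mult_mono) (use assms[of i] in auto)
  qed
  also have "\<dots> = real CARD('d) * norm h * B" by simp
  finally show ?thesis .
qed

lemma qf_bound:
  fixes t :: "real^'d::finite"
  shows "\<bar>qf M t\<bar> \<le> real CARD('d) * norm t * (real CARD('d) * norm t * norm M)"
  unfolding qf_def
proof (rule sum_lin_bound)
  fix k
  show "\<bar>\<Sum>j\<in>UNIV. t$j * M$j$k\<bar> \<le> real CARD('d) * norm t * norm M"
  proof (rule sum_lin_bound)
    fix j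
    have "\<bar>M$j$k\<bar> \<le> norm (M$j)" using component_le_norm_cart[of "M$j" k] by simp
    also have "\<dots> \<le> norm M" by (rule Finite_Cartesian_Product.norm_nth_le)
    finally show "\<bar>M$j$k\<bar> \<le> norm M" .
  qed
qed

lemma cube_bound:
  fixes h :: "real^'d::finite"
  assumes "\<And>i j k. \<bar>c i j k\<bar> \<le> m"
  shows "\<bar>\<Sum>k\<in>UNIV. h$k * (\<Sum>j\<in>UNIV. h$j * (\<Sum>i\<in>UNIV. h$i * c i j k))\<bar>
     \<le> real CARD('d) * norm h * (real CARD('d) * norm h * (real CARD('d) * norm h * m))"
  by (intro sum_lin_bound assms)

lemma outer_prob_nonneg:
  assumes "prob_space M" shows "0 \<le> outer_prob M A"
  unfolding outer_prob_def
  by (rule cInf_greatest) auto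

lemma outer_prob_split:
  assumes M: "prob_space M" and sub: "A \<inter> space M \<subseteq> A1 \<union> A2" and A2: "A2 \<in> sets M"
  shows "outer_prob M A \<le> outer_prob M A1 + measure M A2"
proof -
  interpret prob_space M by (rule M)
  have "outer_prob M A - measure M A2 \<le> outer_prob M A1"
    unfolding outer_prob_def[of M A1]
  proof (rule cInf_greatest)
    show "{measure M B |B. B \<in> sets M \<and> A1 \<inter> space M \<subseteq> B} \<noteq> {}" by auto
  next
    fix x assume "x \<in> {measure M B |B. B \<in> sets M \<and> A1 \<inter> space M \<subseteq> B}"
    then obtain B where B: "B \<in> sets M" "A1 \<inter> space M \<subseteq> B" and x: "x = measure M B" by auto
    have "outer_prob M A \<le> measure M (B \<union> A2)"
      unfolding outer_prob_def
    proof (rule cInf_lower)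
      show "measure M (B \<union> A2) \<in> {measure M B' |B'. B' \<in> sets M \<and> A \<inter> space M \<subseteq> B'}"
        using B A2 sub by blast
      show "bdd_below {measure M B' |B'. B' \<in> sets M \<and> A \<inter> space M \<subseteq> B'}"
        by (rule bdd_belowI[of _ 0]) auto
    qed
    also have "\<dots> \<le> measure M B + measure M A2"
      using B A2 by (intro measure_subadditive) (auto simp: emeasure_eq_measure)
    finally show "outer_prob M A - measure M A2 \<le> x" using x by simp
  qed
  thus ?thesis by simp
qed

lemma ennreal_inv_le:
  assumes e: "0 < e" and X: "ennreal e < X"
  shows "1 \<le> ennreal (1/e) * X"
proof (cases X)
  case (real x)
  with X e have "e < x" "0 \<le> x" by (auto simp: ennreal_less_iff)
  hence "1 \<le> (1/e) * x" using e by (simp add: field_simps)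
  moreover have "ennreal (1/e) * X = ennreal ((1/e) * x)" using real e ennreal_mult[of "1/e" x] by simp
  ultimately show ?thesis by simp
next
  case top
  with e show ?thesis by (simp add: ennreal_mult_top)
qed

theorem proposition1:
  fixes M :: "'a measure" and N :: "'y measure" and Y :: "nat \<Rightarrow> 'a \<Rightarrow> 'y"
    and Q :: "'s measure" and lS :: "nat \<Rightarrow> real^'d::finite \<Rightarrow> 'y \<Rightarrow> 's \<Rightarrow> real"
    and mu :: "nat \<Rightarrow> real^'d \<Rightarrow> 'y \<Rightarrow> real"
    and \<Theta> :: "(real^'d) set" and \<theta>star :: "real^'d"
    and K1 K2 :: "real^'d^'d" and B0 :: "(real^'d) set" and C :: real
  assumes M: "prob_space M"
    and Ymeas: "\<And>i. Y i \<in> measurable M N"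
    and Q: "prob_space Q"
    and mu_def: "\<And>i \<theta> y. mu i \<theta> y = (\<integral>s. lS i \<theta> y s \<partial>Q)"
    and mu_meas: "\<And>i \<theta>. (\<lambda>y. mu i \<theta> y) \<in> borel_measurable N"
    and proxy: "\<theta>star \<in> \<Theta>"
      "\<And>n \<theta>. n \<ge> 1 \<Longrightarrow> \<theta> \<in> \<Theta> \<Longrightarrow>
         (\<integral>\<omega>. (\<Sum>i=1..n. mu i \<theta> (Y i \<omega>)) \<partial>M) \<le> (\<integral>\<omega>. (\<Sum>i=1..n. mu i \<theta>star (Y i \<omega>)) \<partial>M)"
    and smooth: "\<And>i y. C3 (\<lambda>\<theta>. mu i \<theta> y)"
    and K1: "pos_def_mat K1"
    and score: "conv_in_distr M
                  (\<lambda>n \<omega>. (1 / sqrt (real n)) *\<^sub>R (\<Sum>i=1..n. gradient_vec (\<lambda>\<theta>. mu i \<theta> (Y i \<omega>)) \<theta>star))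
                  (mvnormal K1)"
    and K2: "pos_def_mat K2"
    and hess: "conv_in_prob M
                  (\<lambda>n \<omega>. (1 / real n) *\<^sub>R (\<Sum>i=1..n. hessian_mat (\<lambda>\<theta>. mu i \<theta> (Y i \<omega>)) \<theta>star))
                  (- K2)"
    and B0: "\<exists>c r. B0 = ball c r" "\<theta>star \<in> B0"
    and third: "\<And>i. (\<integral>\<^sup>+\<omega>. (\<Squnion>\<theta>\<in>B0. ennreal (MAX k1\<in>UNIV. MAX k2\<in>UNIV. MAX k3\<in>UNIV.
                         \<bar>third_partial (\<lambda>\<theta>. mu i \<theta> (Y i \<omega>)) k1 k2 k3 \<theta>\<bar>)) \<partial>M) \<le> ennreal C"
  shows "conv_in_distr M
           (\<lambda>n \<omega>. (1 / sqrt (real n)) *\<^sub>R (\<Sum>i=1..n. gradient_vec (\<lambda>\<theta>. mu i \<theta> (Y i \<omega>)) \<theta>star))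
           (mvnormal K1)
       \<and> (\<forall>B :: (real^'d) set. bounded B \<and> 0 \<in> B \<longrightarrow>
           unif_conv_in_prob_zero M
             (\<lambda>n t \<omega>.
                (\<Sum>i=1..n. mu i (\<theta>star + (1 / sqrt (real n)) *\<^sub>R t) (Y i \<omega>))
                - (\<Sum>i=1..n. mu i \<theta>star (Y i \<omega>))
                - ((1 / sqrt (real n)) *\<^sub>R (\<Sum>i=1..n. gradient_vec (\<lambda>\<theta>. mu i \<theta> (Y i \<omega>)) \<theta>star)) \<bullet> t
                + (1 / 2) * (t \<bullet> (K2 *v t)))
             B)"
proof -
  interpret P: prob_space M by (rule M)
  define F where "F i \<omega> = (\<lambda>\<theta>. mu i \<theta> (Y i \<omega>))" for i \<omega>
  define Mx where "Mx i \<omega> \<theta> = (MAX k1\<in>UNIV. MAX k2\<in>UNIV. MAX k3\<in>UNIV. \<bar>third_partial (F i \<omega>) k1 k2 k3 \<theta>\<bar>)" for i \<omega> \<theta>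
  define S where "S i \<omega> = (\<Squnion>\<theta>\<in>B0. ennreal (Mx i \<omega> \<theta>))" for i \<omega>
  have C3F: "C3 (F i \<omega>)" for i \<omega> using smooth by (simp add: F_def)
  have hp0: "has_partial k (F i \<omega>)" for i \<omega> k using C3F unfolding C3_def by blast
  have hp1: "has_partial j (partial_deriv k (F i \<omega>))" for i \<omega> j k using C3F unfolding C3_def by blast
  have hp2: "has_partial l (partial_deriv j (partial_deriv k (F i \<omega>)))" for i \<omega> l j k
    using C3F unfolding C3_def by blast
  have Fmeas: "(\<lambda>\<omega>. F i \<omega> \<theta>) \<in> borel_measurable M" for i \<theta>
    unfolding F_def using measurable_compose[OF Ymeas mu_meas] .
  have m1: "(\<lambda>\<omega>. partial_deriv k (F i \<omega>) \<theta>) \<in> borel_measurable M" for i k \<theta>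
    by (rule partial_meas[OF Fmeas hp0])
  have m2: "(\<lambda>\<omega>. partial_deriv j (partial_deriv k (F i \<omega>)) \<theta>) \<in> borel_measurable M" for i j k \<theta>
    by (rule partial_meas[where G="\<lambda>\<omega>. partial_deriv k (F i \<omega>)", OF m1 hp1])
  have m3: "(\<lambda>\<omega>. third_partial (F i \<omega>) l j k \<theta>) \<in> borel_measurable M" for i l j k \<theta>
    unfolding third_partial_def
    by (rule partial_meas[where G="\<lambda>\<omega>. partial_deriv j (partial_deriv k (F i \<omega>))", OF m2 hp2])
  have mMax: "(\<lambda>\<omega>. ennreal (Mx i \<omega> \<theta>)) \<in> borel_measurable M" for i \<theta>
  proof -
    have "(\<lambda>\<omega>. Mx i \<omega> \<theta>) \<in> borel_measurable M"
      unfolding Mx_def by (intro borel_measurable_Max borel_measurable_abs m3) auto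
    thus ?thesis by measurable
  qed
  obtain D :: "(real^'d) set" where D: "countable D" "\<forall>X. open X \<longrightarrow> X \<noteq> {} \<longrightarrow> (\<exists>d\<in>D. d \<in> X)"
    using countable_dense_exists by blast
  have B0open: "open B0" using B0(1) by auto
  have cont3: "continuous_on UNIV (third_partial (F i \<omega>) a b c)" for i \<omega> a b c
  proof -
    have "third_partial (F i \<omega>) a b c = partial_deriv a (partial_deriv b (partial_deriv c (F i \<omega>)))"
      by (rule ext) (simp add: third_partial_def)
    thus ?thesis using C3F unfolding C3_def by simp
  qed
  have Seq: "S i = (\<lambda>\<omega>. \<Squnion>\<theta>\<in>B0 \<inter> D. ennreal (Mx i \<omega> \<theta>))" for i
  proof (rule ext)
    fix \<omega>
    show "S i \<omega> = (\<Squnion>\<theta>\<in>B0 \<inter> D. ennreal (Mx i \<omega> \<theta>))"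
      unfolding S_def
    proof (rule sup_dense[OF B0open D(2)])
      fix \<theta> r assume "\<theta> \<in> B0" "r < Mx i \<omega> \<theta>"
      thus "\<exists>V. open V \<and> \<theta> \<in> V \<and> (\<forall>\<theta>'\<in>V. r < Mx i \<omega> \<theta>')"
        unfolding Mx_def by (intro max3_lsc[where \<phi>="\<lambda>a b c. third_partial (F i \<omega>) a b c"] cont3)
    qed
  qed
  have Smeas: "S i \<in> borel_measurable M" for i
    unfolding Seq
    by (rule borel_measurable_SUP) (use D(1) mMax in auto)
  have Sint: "(\<integral>\<^sup>+\<omega>. S i \<omega> \<partial>M) \<le> ennreal C" for i
    using third[of i] by (simp add: S_def Mx_def F_def)
  have markov: "emeasure M {\<omega>\<in>space M. 1 \<le> ennreal a * (ennreal c * (\<Sum>i=1..n. S i \<omega>))}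
      \<le> ennreal a * (ennreal c * (of_nat n * ennreal C))" for a c n
  proof -
    have um: "(\<lambda>\<omega>. ennreal c * (\<Sum>i=1..n. S i \<omega>)) \<in> borel_measurable M"
      using Smeas by measurable
    have "emeasure M {\<omega>\<in>space M. 1 \<le> ennreal a * (ennreal c * (\<Sum>i=1..n. S i \<omega>))}
       \<le> ennreal a * set_nn_integral M (space M) (\<lambda>\<omega>. ennreal c * (\<Sum>i=1..n. S i \<omega>))"
      by (rule nn_integral_Markov_inequality) (use um in auto)
    also have "set_nn_integral M (space M) (\<lambda>\<omega>. ennreal c * (\<Sum>i=1..n. S i \<omega>))
        = (\<integral>\<^sup>+\<omega>. ennreal c * (\<Sum>i=1..n. S i \<omega>) \<partial>M)"
      by (rule nn_integral_cong) simp
    also have "\<dots> = ennreal c * (\<integral>\<^sup>+\<omega>. (\<Sum>i=1..n. S i \<omega>) \<partial>M)"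
      by (rule nn_integral_cmult) (use Smeas in measurable)
    also have "(\<integral>\<^sup>+\<omega>. (\<Sum>i=1..n. S i \<omega>) \<partial>M) = (\<Sum>i=1..n. (\<integral>\<^sup>+\<omega>. S i \<omega> \<partial>M))"
      by (rule nn_integral_sum) (use Smeas in auto)
    also have "\<dots> \<le> (\<Sum>i=1..n. ennreal C)" by (rule sum_mono) (rule Sint)
    also have "\<dots> = of_nat n * ennreal C" by simp
    finally show ?thesis by (simp add: mult_left_mono)
  qed
  have mbound: "measure M {\<omega>\<in>space M. 1 \<le> ennreal a * (ennreal c * (\<Sum>i=1..n. S i \<omega>))}
      \<le> a * (c * (real n * max C 0))" if "a \<ge> 0" "c \<ge> 0" for a c n
  proof -
    have "ennreal (a * (c * (real n * max C 0))) = ennreal a * (ennreal c * (ennreal (real n) * ennreal (max C 0)))"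
      using that by (simp only: ennreal_mult max.cobounded2 of_nat_0_le_iff mult_nonneg_nonneg)
    hence "ennreal a * (ennreal c * (of_nat n * ennreal C)) = ennreal (a * (c * (real n * max C 0)))"
      by (simp add: ennreal_of_nat_eq_real_of_nat)
    with markov[of a c n] show ?thesis
      unfolding measure_def using that by (intro enn2real_leI) auto
  qed
  define gr where "gr n \<omega> = (1 / sqrt (real n)) *\<^sub>R (\<Sum>i=1..n. gradient_vec (\<lambda>\<theta>. mu i \<theta> (Y i \<omega>)) \<theta>star)" for n \<omega>
  define Hn where "Hn n \<omega> = (1 / real n) *\<^sub>R (\<Sum>i=1..n. hessian_mat (\<lambda>\<theta>. mu i \<theta> (Y i \<omega>)) \<theta>star)" for n \<omega>
  define R where "R n t \<omega> = (\<Sum>i=1..n. mu i (\<theta>star + (1 / sqrt (real n)) *\<^sub>R t) (Y i \<omega>))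
                - (\<Sum>i=1..n. mu i \<theta>star (Y i \<omega>)) - gr n \<omega> \<bullet> t + (1 / 2) * (t \<bullet> (K2 *v t))" for n t \<omega>
  define dd where "dd = real CARD('d)"
  have dd: "dd > 0" by (simp add: dd_def)
  obtain \<rho> where \<rho>: "\<rho> > 0" "ball \<theta>star \<rho> \<subseteq> B0" using B0open B0(2) openE by blast
  have main: "unif_conv_in_prob_zero M R B" if "bounded B" "0 \<in> B" for B :: "(real^'d) set"
  proof -
    obtain b where b: "b > 0" "\<And>t. t \<in> B \<Longrightarrow> norm t \<le> b" using bounded_pos \<open>bounded B\<close> by blast
    show ?thesis unfolding unif_conv_in_prob_zero_def
    proof (intro allI impI)
      fix \<epsilon> :: real assume \<epsilon>: "\<epsilon> > 0"
      define \<delta> where "\<delta> = \<epsilon> / (dd * dd * b * b)"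
      have \<delta>: "\<delta> > 0" using \<epsilon> dd b by (simp add: \<delta>_def)
      define c where "c n = (dd * (b / sqrt (real n))) ^ 3 / 6" for n
      have c0: "c n \<ge> 0" for n using dd b by (simp add: c_def)
      define E1 where "E1 n = {\<omega>\<in>space M. \<delta> < dist (Hn n \<omega>) (- K2)}" for n
      define E2 where "E2 n = {\<omega>\<in>space M. 1 \<le> ennreal (1 / (\<epsilon>/2)) * (ennreal (c n) * (\<Sum>i=1..n. S i \<omega>))}" for n
      define E where "E n = {\<omega>\<in>space M. \<exists>t\<in>B. \<epsilon> < \<bar>R n t \<omega>\<bar>}" for n
      define bd where "bd n = (1 / (\<epsilon>/2)) * (c n * (real n * max C 0))" for n
      have E1lim: "(\<lambda>n. outer_prob M (E1 n)) \<longlonglongrightarrow> 0"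
        using hess \<delta> unfolding conv_in_prob_def E1_def Hn_def by blast
      have E2sets: "E2 n \<in> sets M" for n
        unfolding E2_def using Smeas by measurable
      have E2bound: "measure M (E2 n) \<le> bd n" for n
        unfolding E2_def bd_def using \<epsilon> c0 by (intro mbound) auto
      have bdlim: "bd \<longlonglongrightarrow> 0"
      proof -
        have "filterlim (\<lambda>n. sqrt (real n)) at_top sequentially"
          by (rule filterlim_compose[OF sqrt_at_top filterlim_real_sequentially])
        from tendsto_inverse_0_at_top[OF this]
        have "(\<lambda>n. 1 / sqrt (real n)) \<longlonglongrightarrow> 0" by (simp add: inverse_eq_divide)
        hence L: "(\<lambda>n. (2 / \<epsilon>) * ((dd * b) ^ 3 / 6) * max C 0 * (1 / sqrt (real n))) \<longlonglongrightarrow> 0"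
          by (intro tendsto_mult_right_zero)
        have "\<forall>\<^sub>F n in sequentially. (2 / \<epsilon>) * ((dd * b) ^ 3 / 6) * max C 0 * (1 / sqrt (real n)) = bd n"
        proof (rule eventually_sequentiallyI[of 1])
          fix n :: nat assume "n \<ge> 1"
          hence sp: "sqrt (real n) > 0" by simp
          have "sqrt (real n) ^ 3 = real n * sqrt (real n)"
            by (simp add: power3_eq_cube)
          thus "(2 / \<epsilon>) * ((dd * b) ^ 3 / 6) * max C 0 * (1 / sqrt (real n)) = bd n"
            using sp \<epsilon> unfolding bd_def c_def by (simp add: field_simps power_divide power_mult_distrib)
        qed
        from Lim_transform_eventually[OF L this] show ?thesis .
      qed
      define N where "N = nat \<lceil>(b / \<rho>)^2\<rceil> + 1"
      have incl: "E n \<inter> space M \<subseteq> E1 n \<union> E2 n" if "n \<ge> N" for n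
      proof
        fix \<omega> assume "\<omega> \<in> E n \<inter> space M"
        then obtain t where \<omega>: "\<omega> \<in> space M" and t: "t \<in> B" and big: "\<epsilon> < \<bar>R n t \<omega>\<bar>"
          unfolding E_def by auto
        show "\<omega> \<in> E1 n \<union> E2 n"
        proof (cases "\<delta> < dist (Hn n \<omega>) (- K2)")
          case True thus ?thesis using \<omega> by (simp add: E1_def)
        next
          case False
          hence distle: "norm (Hn n \<omega> + K2) \<le> \<delta>" by (simp add: dist_norm)
          have n1: "n \<ge> 1" using that by (simp add: N_def)
          have sp: "sqrt (real n) > 0" using n1 by simp
          have "real n > (b / \<rho>)^2" using that unfolding N_def by linarith
          hence "sqrt (real n) > sqrt ((b / \<rho>)^2)" by (rule real_sqrt_less_mono)
          hence "sqrt (real n) > b / \<rho>" using b \<rho> by simp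
          hence brho: "b / sqrt (real n) < \<rho>" using sp \<rho> by (simp add: field_simps)
          define h where "h = (1 / sqrt (real n)) *\<^sub>R t"
          have nt: "norm t \<le> b" using b t by simp
          have nh: "norm h \<le> b / sqrt (real n)"
            unfolding h_def using nt sp by (simp add: divide_right_mono)
          define g where "g i = gradient_vec (F i \<omega>) \<theta>star" for i
          define H where "H i = hessian_mat (F i \<omega>) \<theta>star" for i
          define rem where "rem i = F i \<omega> (\<theta>star + h) - F i \<omega> \<theta>star - g i \<bullet> h - (1/2) * qf (H i) h" for i
          have remb: "ennreal \<bar>rem i\<bar> \<le> ennreal (c n) * S i \<omega>" for i
          proof -
            from taylor3[OF C3F, of i \<omega> \<theta>star h] obtain s where s: "0 < s" "s < 1"
              and tay: "F i \<omega> (\<theta>star + h) = F i \<omega> \<theta>star + g i \<bullet> h + (1/2) * qf (H i) h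
                + (1/6) * (\<Sum>k\<in>UNIV. h$k * (\<Sum>j\<in>UNIV. h$j * (\<Sum>l\<in>UNIV. h$l * third_partial (F i \<omega>) l j k (\<theta>star + s *\<^sub>R h))))"
              unfolding g_def H_def qf_def by blast
            define \<theta>' where "\<theta>' = \<theta>star + s *\<^sub>R h"
            have "s * norm h \<le> norm h" using s by (intro mult_left_le_one_le) auto
            hence "norm (s *\<^sub>R h) < \<rho>" using s nh brho by simp
            hence th'B: "\<theta>' \<in> B0" using \<rho>(2) by (auto simp: \<theta>'_def dist_norm)
            have mge: "\<bar>third_partial (F i \<omega>) l j k \<theta>'\<bar> \<le> Mx i \<omega> \<theta>'" for l j k
            proof -
              have ge: "G x \<le> (MAX k\<in>UNIV. G k)" for G :: "'d \<Rightarrow> real" and x by (rule Max_ge) auto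
              show ?thesis unfolding Mx_def
                by (rule order_trans[OF order_trans[OF ge ge] ge])
            qed
            have m0: "Mx i \<omega> \<theta>' \<ge> 0" using mge[of undefined undefined undefined] by linarith
            have "\<bar>rem i\<bar> = (1/6) * \<bar>\<Sum>k\<in>UNIV. h$k * (\<Sum>j\<in>UNIV. h$j * (\<Sum>l\<in>UNIV. h$l * third_partial (F i \<omega>) l j k \<theta>'))\<bar>"
              unfolding rem_def tay \<theta>'_def by simp
            also have "\<dots> \<le> (1/6) * (dd * norm h * (dd * norm h * (dd * norm h * Mx i \<omega> \<theta>')))"
              unfolding dd_def by (intro mult_left_mono cube_bound mge) auto
            also have "\<dots> = (dd * norm h) ^ 3 / 6 * Mx i \<omega> \<theta>'" by (simp add: power3_eq_cube)
            also have "\<dots> \<le> c n * Mx i \<omega> \<theta>'"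
              unfolding c_def using m0 dd nh
              by (intro mult_right_mono divide_right_mono power_mono mult_left_mono) auto
            finally have "ennreal \<bar>rem i\<bar> \<le> ennreal (c n) * ennreal (Mx i \<omega> \<theta>')"
              using c0 m0 by (simp add: ennreal_mult[symmetric] ennreal_leI)
            also have "\<dots> \<le> ennreal (c n) * S i \<omega>"
              unfolding S_def using th'B by (intro mult_left_mono SUP_upper) auto
            finally show ?thesis .
          qed
          have Req: "R n t \<omega> = (\<Sum>i=1..n. rem i) + (1/2) * qf (Hn n \<omega> + K2) t"
          proof -
            have sq: "(1 / sqrt (real n))^2 = 1 / real n" by (simp add: power_divide)
            have a: "gr n \<omega> \<bullet> t = (\<Sum>i=1..n. g i \<bullet> h)"
              unfolding gr_def g_def h_def F_def by (simp add: inner_sum_left sum_distrib_left)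
            have b2: "(\<Sum>i=1..n. (1/2) * qf (H i) h) = (1/2) * qf (Hn n \<omega>) t"
              unfolding h_def Hn_def H_def F_def
              by (simp add: qf_vec_scale qf_scaleR qf_sum sq sum_distrib_left)
            have c2: "t \<bullet> (K2 *v t) = qf K2 t" by (rule qf_inner)
            have d2: "(\<Sum>i=1..n. rem i) = (\<Sum>i=1..n. F i \<omega> (\<theta>star + h)) - (\<Sum>i=1..n. F i \<omega> \<theta>star)
                 - (\<Sum>i=1..n. g i \<bullet> h) - (\<Sum>i=1..n. (1/2) * qf (H i) h)"
              unfolding rem_def by (simp add: sum_subtractf)
            have e2: "R n t \<omega> = (\<Sum>i=1..n. F i \<omega> (\<theta>star + h)) - (\<Sum>i=1..n. F i \<omega> \<theta>star) - gr n \<omega> \<bullet> t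
                 + (1/2) * (t \<bullet> (K2 *v t))"
              unfolding R_def F_def h_def by simp
            show ?thesis using a b2 c2 d2 e2 qf_add[of "Hn n \<omega>" K2 t] by (simp add: algebra_simps)
          qed
          have "\<bar>(1/2) * qf (Hn n \<omega> + K2) t\<bar> \<le> (1/2) * (dd * norm t * (dd * norm t * norm (Hn n \<omega> + K2)))"
            using qf_bound[of "Hn n \<omega> + K2" t] unfolding dd_def by simp
          also have "\<dots> \<le> (1/2) * (dd * b * (dd * b * \<delta>))"
            using nt distle dd b by (intro mult_left_mono mult_mono) auto
          also have "\<dots> = \<epsilon> / 2" using dd b by (simp add: \<delta>_def field_simps)
          finally have "\<bar>(1/2) * qf (Hn n \<omega> + K2) t\<bar> \<le> \<epsilon> / 2" .
          with big Req have half: "\<epsilon> / 2 < \<bar>\<Sum>i=1..n. rem i\<bar>" by linarith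
          have "ennreal (\<epsilon> / 2) < ennreal \<bar>\<Sum>i=1..n. rem i\<bar>"
            using half \<epsilon> by (simp add: ennreal_less_iff)
          also have "\<dots> \<le> ennreal (\<Sum>i=1..n. \<bar>rem i\<bar>)" by (intro ennreal_leI sum_abs)
          also have "\<dots> = (\<Sum>i=1..n. ennreal \<bar>rem i\<bar>)" by (simp add: sum_ennreal)
          also have "\<dots> \<le> (\<Sum>i=1..n. ennreal (c n) * S i \<omega>)" by (intro sum_mono remb)
          also have "\<dots> = ennreal (c n) * (\<Sum>i=1..n. S i \<omega>)" by (simp add: sum_distrib_left)
          finally have "1 \<le> ennreal (1 / (\<epsilon>/2)) * (ennreal (c n) * (\<Sum>i=1..n. S i \<omega>))"
            by (rule ennreal_inv_le[rotated]) (use \<epsilon> in simp)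
          thus ?thesis using \<omega> by (simp add: E2_def)
        qed
      qed
      have up: "\<forall>\<^sub>F n in sequentially. outer_prob M (E n) \<le> outer_prob M (E1 n) + bd n"
      proof (rule eventually_sequentiallyI[of N])
        fix n assume "n \<ge> N"
        have "outer_prob M (E n) \<le> outer_prob M (E1 n) + measure M (E2 n)"
          by (rule outer_prob_split[OF M incl[OF \<open>n \<ge> N\<close>] E2sets])
        thus "outer_prob M (E n) \<le> outer_prob M (E1 n) + bd n" using E2bound[of n] by linarith
      qed
      have lo: "\<forall>\<^sub>F n in sequentially. 0 \<le> outer_prob M (E n)"
        by (simp add: outer_prob_nonneg[OF M])
      have "(\<lambda>n. outer_prob M (E1 n) + bd n) \<longlonglongrightarrow> 0 + 0" by (intro tendsto_add E1lim bdlim)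
      hence "(\<lambda>n. outer_prob M (E n)) \<longlonglongrightarrow> 0"
        by (intro tendsto_sandwich[OF lo up tendsto_const]) simp
      thus "(\<lambda>n. outer_prob M {\<omega> \<in> space M. \<exists>t\<in>B. \<epsilon> < \<bar>R n t \<omega>\<bar>}) \<longlonglongrightarrow> 0"
        by (simp add: E_def)
    qed
  qed
  have Rlam: "R = (\<lambda>n t \<omega>.
                (\<Sum>i=1..n. mu i (\<theta>star + (1 / sqrt (real n)) *\<^sub>R t) (Y i \<omega>))
                - (\<Sum>i=1..n. mu i \<theta>star (Y i \<omega>))
                - ((1 / sqrt (real n)) *\<^sub>R (\<Sum>i=1..n. gradient_vec (\<lambda>\<theta>. mu i \<theta> (Y i \<omega>)) \<theta>star)) \<bullet> t
                + (1 / 2) * (t \<bullet> (K2 *v t)))"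
    by (intro ext) (simp add: R_def gr_def)
  show ?thesis using score main unfolding Rlam by blast
qed

end
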